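(* For all $\alpha,\varepsilon>0$ and $k\in\mathbb{N}$, there exist $\eta>0$ and $N\in\mathbb{N}$ such that for all $n>N$ the following holds. Suppose $f\colon[n]\to[0,1]$ is such that every interval $J\subseteq[n]$ of length at least $\lfloor\eta n\rfloor$ satisfies \[ \Big|\frac{1}{|J|}\sum_{t\in J}f(t)-\alpha\Big|\le\eta. \] Then for all $x,y\in[k]$, \[ \sum_{t=\lceil\eta n\rceil}^{\lfloor(1-\eta)n\rfloor}f(t)\binom{t-1}{x}\binom{n-t}{y}\ge(1-\varepsilon)\alpha\binom{n}{x+y+1}. \]
   Context: An interval $J\subseteq[n]$ is a set of consecutive integers; its length is $|J|$. *)

theory Defs
  imports "HOL-Analysis.Analysis"
begin

text \<open>[n] = {1..n}. An interval of [n] is a set {a..b} of consecutive integers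
  with 1 <= a <= b <= n (nonempty, so the average is defined); its length is b - a + 1.\<close>

definition interval_of :: "nat \<Rightarrow> nat set \<Rightarrow> bool" where
  "interval_of n J \<longleftrightarrow> (\<exists>a b. 1 \<le> a \<and> a \<le> b \<and> b \<le> n \<and> J = {a..b})"

end

theory Submission
  imports Defs
begin

lemma L0: "1 \<le> y \<Longrightarrow> (\<Sum>j<d. (j choose (y-1))) = d choose y"
proof (induction d)
  case 0 then show ?case by simp
next
  case (Suc d)
  obtain y' where y: "y = Suc y'" using Suc.prems by (cases y) auto
  show ?case using Suc by (simp add: y)
qed

lemma Lleft: "1 \<le> x \<Longrightarrow> (\<Sum>a\<in>{1..<Suc t}. ((a-1) choose (x-1))) = t choose x"
proof (induction t)
  case 0 then show ?case by simp
next
  case (Suc t)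
  obtain x' where x: "x = Suc x'" using Suc.prems by (cases x) auto
  show ?case using Suc by (simp add: x)
qed

lemma Lright_aux: "1 \<le> y \<Longrightarrow> d \<le> n \<Longrightarrow> (\<Sum>b\<in>{n-d<..n}. ((n-b) choose (y-1))) = d choose y"
proof (induction d)
  case 0 then show ?case by simp
next
  case (Suc d)
  obtain y' where y: "y = Suc y'" using Suc.prems by (cases y) auto
  have e: "{n - Suc d<..n} = insert (n-d) {n-d<..n}" using Suc.prems by auto
  have "(\<Sum>b\<in>{n - Suc d<..n}. ((n-b) choose (y-1))) = ((n-(n-d)) choose (y-1)) + (\<Sum>b\<in>{n-d<..n}. ((n-b) choose (y-1)))"
    unfolding e by (subst sum.insert) auto
  also have "\<dots> = (d choose y') + (d choose y)" using Suc by (simp add: y)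
  finally show ?case by (simp add: y)
qed

lemma Lright: "1 \<le> y \<Longrightarrow> t \<le> n \<Longrightarrow> (\<Sum>b\<in>{t<..n}. ((n-b) choose (y-1))) = (n-t) choose y"
  using Lright_aux[of y "n-t" n] by simp

lemma S: "(\<Sum>t\<in>{1..n}. ((t-1) choose x) * ((n-t) choose y)) = n choose (x+y+1)"
proof (induction n arbitrary: y)
  case 0 then show ?case by simp
next
  case (Suc n)
  show ?case
  proof (cases y)
    case 0
    have "(\<Sum>t\<in>{1..<Suc (Suc n)}. ((t-1) choose x)) = Suc n choose (x+1)"
      using Lleft[of "x+1" "Suc n"] by simp
    then show ?thesis using 0 by (simp add: atLeastLessThanSuc_atLeastAtMost)
  next
    case (Suc y')
    have "(\<Sum>t\<in>{1..Suc n}. ((t-1) choose x) * ((Suc n-t) choose y)) = (\<Sum>t\<in>{1..n}. ((t-1) choose x) * ((Suc n-t) choose y))"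
      using Suc by simp
    also have "\<dots> = (\<Sum>t\<in>{1..n}. ((t-1) choose x) * ((n-t) choose y)) + (\<Sum>t\<in>{1..n}. ((t-1) choose x) * ((n-t) choose y'))"
      by (subst sum.distrib[symmetric], rule sum.cong) (auto simp: Suc Suc_diff_le algebra_simps)
    also have "\<dots> = (n choose (x+y+1)) + (n choose (x+y'+1))" using Suc.IH by simp
    also have "\<dots> = Suc n choose (x+y+1)" using Suc by simp
    finally show ?thesis .
  qed
qed

definition wt :: "nat \<Rightarrow> nat \<Rightarrow> nat \<Rightarrow> nat \<Rightarrow> nat \<Rightarrow> real" where
  "wt x y n a b = (if a < b then real (((a-1) choose (x-1)) * ((n-b) choose (y-1))) else 0)"

lemma wt_nonneg: "wt x y n a b \<ge> 0" by (simp add: wt_def)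

lemma g_decomp:
  assumes "1 \<le> x" "1 \<le> y" "t \<in> {1..n}"
  shows "real ((t-1) choose x) * real ((n-t) choose y) =
     (\<Sum>a\<in>{1..n}. \<Sum>b\<in>{1..n}. if a < t \<and> t < b then wt x y n a b else 0)"
proof -
  have A: "real ((t-1) choose x) = (\<Sum>a\<in>{1..n}. if a < t then real ((a-1) choose (x-1)) else 0)"
  proof -
    have "{a\<in>{1..n}. a < t} = {1..<Suc (t-1)}" using assms(3) by auto
    then have "(\<Sum>a\<in>{1..n}. if a < t then real ((a-1) choose (x-1)) else 0)
        = (\<Sum>a\<in>{1..<Suc (t-1)}. real ((a-1) choose (x-1)))"
      by (simp add: sum.inter_filter[symmetric])
    also have "\<dots> = real ((t-1) choose x)"
      using Lleft[OF assms(1), of "t-1"] by (metis of_nat_sum)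
    finally show ?thesis by simp
  qed
  have B: "real ((n-t) choose y) = (\<Sum>b\<in>{1..n}. if t < b then real ((n-b) choose (y-1)) else 0)"
  proof -
    have "{b\<in>{1..n}. t < b} = {t<..n}" using assms(3) by auto
    then have "(\<Sum>b\<in>{1..n}. if t < b then real ((n-b) choose (y-1)) else 0)
        = (\<Sum>b\<in>{t<..n}. real ((n-b) choose (y-1)))"
      by (simp add: sum.inter_filter[symmetric])
    also have "\<dots> = real ((n-t) choose y)"
      using Lright[OF assms(2), of t n] assms(3) by (metis atLeastAtMost_iff of_nat_sum)
    finally show ?thesis by simp
  qed
  show ?thesis unfolding A B sum_product
    by (rule sum.cong[OF refl], rule sum.cong[OF refl]) (auto simp: wt_def)
qed

lemma decomp:
  fixes h :: "nat \<Rightarrow> real"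
  assumes "1 \<le> x" "1 \<le> y" "T \<subseteq> {1..n}"
  shows "(\<Sum>t\<in>T. h t * real ((t-1) choose x) * real ((n-t) choose y)) =
     (\<Sum>a\<in>{1..n}. \<Sum>b\<in>{1..n}. wt x y n a b * (\<Sum>t\<in>T. if a < t \<and> t < b then h t else 0))"
proof -
  have fT: "finite T" using assms(3) finite_subset by blast
  have "(\<Sum>t\<in>T. h t * real ((t-1) choose x) * real ((n-t) choose y)) =
     (\<Sum>t\<in>T. h t * (\<Sum>a\<in>{1..n}. \<Sum>b\<in>{1..n}. if a < t \<and> t < b then wt x y n a b else 0))"
    using g_decomp[OF assms(1,2)] assms(3) by (intro sum.cong) (auto simp: mult.assoc)
  also have "\<dots> = (\<Sum>t\<in>T. \<Sum>a\<in>{1..n}. \<Sum>b\<in>{1..n}. wt x y n a b * (if a < t \<and> t < b then h t else 0))"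
    by (simp add: sum_distrib_left if_distrib mult.commute cong: if_cong)
  also have "\<dots> = (\<Sum>a\<in>{1..n}. \<Sum>t\<in>T. \<Sum>b\<in>{1..n}. wt x y n a b * (if a < t \<and> t < b then h t else 0))"
    by (rule sum.swap)
  also have "\<dots> = (\<Sum>a\<in>{1..n}. \<Sum>b\<in>{1..n}. \<Sum>t\<in>T. wt x y n a b * (if a < t \<and> t < b then h t else 0))"
    by (rule sum.cong[OF refl], rule sum.swap)
  also have "\<dots> = (\<Sum>a\<in>{1..n}. \<Sum>b\<in>{1..n}. wt x y n a b * (\<Sum>t\<in>T. if a < t \<and> t < b then h t else 0))"
    by (simp add: sum_distrib_left)
  finally show ?thesis .
qed

lemma total1:
  assumes "1 \<le> x" "1 \<le> y"
  shows "(\<Sum>a\<in>{1..n}. \<Sum>b\<in>{1..n}. wt x y n a b * (real b - real a - 1)) = real (n choose (x+y+1))"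
proof -
  have "real (n choose (x+y+1)) = (\<Sum>t\<in>{1..n}. 1 * real ((t-1) choose x) * real ((n-t) choose y))"
    unfolding S[where n=n and x=x and y=y, symmetric] by (simp add: of_nat_sum)
  also have "\<dots> = (\<Sum>a\<in>{1..n}. \<Sum>b\<in>{1..n}. wt x y n a b * (\<Sum>t\<in>{1..n}. if a < t \<and> t < b then 1 else 0))"
    by (rule decomp[OF assms]) simp
  also have "\<dots> = (\<Sum>a\<in>{1..n}. \<Sum>b\<in>{1..n}. wt x y n a b * (real b - real a - 1))"
  proof (intro sum.cong refl)
    fix a b assume ab: "a \<in> {1..n}" "b \<in> {1..n}"
    show "wt x y n a b * (\<Sum>t\<in>{1..n}. if a < t \<and> t < b then 1 else 0) = wt x y n a b * (real b - real a - 1)"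
    proof (cases "a < b")
      case True
      have "{t\<in>{1..n}. a < t \<and> t < b} = {a<..<b}" using ab by auto
      then have "(\<Sum>t\<in>{1..n}. if a < t \<and> t < b then (1::real) else 0) = real (card {a<..<b})"
        by (simp add: sum.inter_filter[symmetric])
      also have "\<dots> = real b - real a - 1" using True by simp
      finally show ?thesis by simp
    qed (simp add: wt_def)
  qed
  finally show ?thesis by simp
qed

lemma total2:
  assumes "1 \<le> x" "1 \<le> y"
  shows "(\<Sum>a\<in>{1..n}. \<Sum>b\<in>{1..n}. wt x y n a b) = real (n choose (x+y))"
proof -
  have "(\<Sum>a\<in>{1..n}. \<Sum>b\<in>{1..n}. wt x y n a b) = (\<Sum>a\<in>{1..n}. real ((a-1) choose (x-1)) * real ((n-a) choose y))"
  proof (intro sum.cong refl)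
    fix a assume a: "a \<in> {1..n}"
    have "(\<Sum>b\<in>{1..n}. wt x y n a b) = (\<Sum>b\<in>{1..n}. if a < b then real ((a-1) choose (x-1)) * real ((n-b) choose (y-1)) else 0)"
      by (simp add: wt_def cong: if_cong)
    also have "\<dots> = (\<Sum>b\<in>{a<..n}. real ((a-1) choose (x-1)) * real ((n-b) choose (y-1)))"
    proof -
      have "{b\<in>{1..n}. a < b} = {a<..n}" using a by auto
      then show ?thesis by (simp add: sum.inter_filter[symmetric])
    qed
    also have "\<dots> = real ((a-1) choose (x-1)) * real ((n-a) choose y)"
      using Lright[OF assms(2), of a n] a by (simp add: sum_distrib_left[symmetric] flip: of_nat_sum)
    finally show "(\<Sum>b\<in>{1..n}. wt x y n a b) = real ((a-1) choose (x-1)) * real ((n-a) choose y)" .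
  qed
  also have "\<dots> = real (n choose (x - 1 + y + 1))"
    unfolding S[where n=n and x="x-1" and y=y, symmetric] by (simp add: of_nat_sum)
  finally show ?thesis using assms by simp
qed

lemma inner:
  fixes f :: "nat \<Rightarrow> real" and \<alpha> \<eta> :: real
  assumes eta: "0 < \<eta>" "\<eta> < 1" "\<eta> \<le> \<alpha>" and n1: "1 \<le> n"
    and H1: "\<forall>t\<in>{1..n}. 0 \<le> f t \<and> f t \<le> 1"
    and H2: "\<forall>J. interval_of n J \<and> real (card J) \<ge> of_int \<lfloor>\<eta> * real n\<rfloor> \<longrightarrow>
                 \<bar>(\<Sum>t\<in>J. f t) / real (card J) - \<alpha>\<bar> \<le> \<eta>"
    and ab: "1 \<le> a" "b \<le> n" "a < b"
  shows "(\<Sum>t\<in>{nat \<lceil>\<eta> * real n\<rceil>..nat \<lfloor>(1 - \<eta>) * real n\<rfloor>}. if a < t \<and> t < b then f t else 0)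
           \<ge> (\<alpha> - \<eta>) * (real b - real a - 1 - (3 * \<eta> * real n + 1))"
proof -
  define lo where "lo = nat \<lceil>\<eta> * real n\<rceil>"
  define hi where "hi = nat \<lfloor>(1 - \<eta>) * real n\<rfloor>"
  define p where "p = max lo (a+1)"
  define q where "q = min hi (b-1)"
  have en: "\<eta> * real n > 0" using eta n1 by simp
  have c1: "of_int \<lceil>\<eta> * real n\<rceil> < \<eta> * real n + 1" "\<eta> * real n \<le> of_int \<lceil>\<eta> * real n\<rceil>"
    using ceiling_correct[of "\<eta> * real n"] by linarith+
  have lo1: "real lo < \<eta> * real n + 1" "1 \<le> lo"
    using c1 en unfolding lo_def by linarith+
  have hn: "(1 - \<eta>) * real n \<ge> 0" using eta by simp
  have f1: "of_int \<lfloor>(1 - \<eta>) * real n\<rfloor> \<le> (1 - \<eta>) * real n" "(1 - \<eta>) * real n < of_int \<lfloor>(1 - \<eta>) * real n\<rfloor> + 1"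
    using floor_correct[of "(1 - \<eta>) * real n"] by linarith+
  have hi1: "real hi > (1 - \<eta>) * real n - 1" "real hi \<le> (1 - \<eta>) * real n"
    using f1 hn unfolding hi_def by linarith+
  have hin: "hi \<le> n"
  proof -
    have "real hi \<le> real n" using hi1(2) eta by (smt (verit) mult_left_le_one_le of_nat_0_le_iff)
    then show ?thesis by simp
  qed
  have set: "{t\<in>{lo..hi}. a < t \<and> t < b} = {p..q}" by (auto simp: p_def q_def)
  have sumeq: "(\<Sum>t\<in>{lo..hi}. if a < t \<and> t < b then f t else 0) = sum f {p..q}"
    unfolding set[symmetric] by (rule sum.inter_filter[symmetric]) simp
  have p1: "1 \<le> p" and qn: "q \<le> n" using lo1 hin by (auto simp: p_def q_def)
  have S0: "sum f {p..q} \<ge> 0" using H1 p1 qn by (intro sum_nonneg) auto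
  have key: "sum f {p..q} \<ge> (\<alpha> - \<eta>) * (real (card {p..q}) - \<eta> * real n)"
  proof (cases "p \<le> q \<and> real (card {p..q}) \<ge> of_int \<lfloor>\<eta> * real n\<rfloor>")
    case True
    have "interval_of n {p..q}" unfolding interval_of_def using p1 qn True by auto
    with H2 True have h: "\<bar>sum f {p..q} / real (card {p..q}) - \<alpha>\<bar> \<le> \<eta>" by auto
    have cp: "real (card {p..q}) > 0" using True by simp
    have "sum f {p..q} / real (card {p..q}) \<ge> \<alpha> - \<eta>" using h by linarith
    then have "sum f {p..q} \<ge> (\<alpha> - \<eta>) * real (card {p..q})" using cp by (simp add: pos_le_divide_eq)
    moreover have "(\<alpha> - \<eta>) * (\<eta> * real n) \<ge> 0" using eta en by simp
    ultimately show ?thesis by (simp add: right_diff_distrib)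
  next
    case False
    have "real (card {p..q}) \<le> \<eta> * real n"
    proof (cases "p \<le> q")
      case True
      then have "real (card {p..q}) < of_int \<lfloor>\<eta> * real n\<rfloor>" using False by simp
      then show ?thesis using of_int_floor_le[of "\<eta> * real n"] by linarith
    next
      case False then show ?thesis using en by simp
    qed
    then have "(\<alpha> - \<eta>) * (real (card {p..q}) - \<eta> * real n) \<le> 0"
      using eta by (intro mult_nonneg_nonpos) auto
    then show ?thesis using S0 by linarith
  qed
  have cardb: "real (card {p..q}) \<ge> real q + 1 - real p" by simp
  have qb: "real q \<ge> real b - 1 - (real n - real hi)" using ab hin by (auto simp: q_def min_def)
  have pb: "real p \<le> real a + real lo" using lo1 by (auto simp: p_def max_def)
  have "real (card {p..q}) - \<eta> * real n \<ge> real b - real a - 1 - (3 * \<eta> * real n + 1)"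
    using cardb qb pb lo1 hi1 by (simp add: algebra_simps)
  then have "(\<alpha> - \<eta>) * (real (card {p..q}) - \<eta> * real n) \<ge> (\<alpha> - \<eta>) * (real b - real a - 1 - (3 * \<eta> * real n + 1))"
    using eta by (intro mult_left_mono) auto
  then show ?thesis using key sumeq unfolding lo_def hi_def by linarith
qed

lemma main_bound:
  fixes f :: "nat \<Rightarrow> real" and \<alpha> \<eta> :: real
  assumes eta: "0 < \<eta>" "\<eta> < 1" "\<eta> \<le> \<alpha>" and n1: "1 \<le> n"
    and H1: "\<forall>t\<in>{1..n}. 0 \<le> f t \<and> f t \<le> 1"
    and H2: "\<forall>J. interval_of n J \<and> real (card J) \<ge> of_int \<lfloor>\<eta> * real n\<rfloor> \<longrightarrow>
                 \<bar>(\<Sum>t\<in>J. f t) / real (card J) - \<alpha>\<bar> \<le> \<eta>"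
    and xy: "1 \<le> x" "1 \<le> y"
  shows "(\<Sum>t\<in>{nat \<lceil>\<eta> * real n\<rceil>..nat \<lfloor>(1 - \<eta>) * real n\<rfloor>}.
                    f t * real ((t - 1) choose x) * real ((n - t) choose y))
          \<ge> (\<alpha> - \<eta>) * (real (n choose (x+y+1)) - (3 * \<eta> * real n + 1) * real (n choose (x+y)))"
proof -
  define lo where "lo = nat \<lceil>\<eta> * real n\<rceil>"
  define hi where "hi = nat \<lfloor>(1 - \<eta>) * real n\<rfloor>"
  define c where "c = 3 * \<eta> * real n + 1"
  have en: "\<eta> * real n > 0" using eta n1 by simp
  have lo1: "1 \<le> lo"
    using le_of_int_ceiling[of "\<eta> * real n"] en unfolding lo_def by linarith
  have hin: "hi \<le> n"
  proof -
    have hn: "(1 - \<eta>) * real n \<ge> 0" using eta by simp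
    have "real hi \<le> (1 - \<eta>) * real n" using of_int_floor_le[of "(1 - \<eta>) * real n"] hn
      unfolding hi_def by linarith
    then have "real hi \<le> real n" using eta by (smt (verit) mult_left_le_one_le of_nat_0_le_iff)
    then show ?thesis by simp
  qed
  have T: "{lo..hi} \<subseteq> {1..n}" using lo1 hin by auto
  have "(\<Sum>t\<in>{lo..hi}. f t * real ((t - 1) choose x) * real ((n - t) choose y))
     = (\<Sum>a\<in>{1..n}. \<Sum>b\<in>{1..n}. wt x y n a b * (\<Sum>t\<in>{lo..hi}. if a < t \<and> t < b then f t else 0))"
    by (rule decomp[OF xy T])
  also have "\<dots> \<ge> (\<Sum>a\<in>{1..n}. \<Sum>b\<in>{1..n}. wt x y n a b * ((\<alpha> - \<eta>) * (real b - real a - 1 - c)))"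
  proof (intro sum_mono)
    fix a b assume a: "a \<in> {1..n}" and b: "b \<in> {1..n}"
    show "wt x y n a b * ((\<alpha> - \<eta>) * (real b - real a - 1 - c)) \<le> wt x y n a b * (\<Sum>t\<in>{lo..hi}. if a < t \<and> t < b then f t else 0)"
    proof (cases "a < b")
      case True
      have "(\<alpha> - \<eta>) * (real b - real a - 1 - c) \<le> (\<Sum>t\<in>{lo..hi}. if a < t \<and> t < b then f t else 0)"
        using inner[OF eta n1 H1 H2, of a b] a b True unfolding lo_def hi_def c_def by auto
      then show ?thesis by (intro mult_left_mono wt_nonneg)
    qed (simp add: wt_def)
  qed
  also have "(\<Sum>a\<in>{1..n}. \<Sum>b\<in>{1..n}. wt x y n a b * ((\<alpha> - \<eta>) * (real b - real a - 1 - c)))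
     = (\<alpha> - \<eta>) * (\<Sum>a\<in>{1..n}. \<Sum>b\<in>{1..n}. wt x y n a b * (real b - real a - 1))
       - ((\<alpha> - \<eta>) * c) * (\<Sum>a\<in>{1..n}. \<Sum>b\<in>{1..n}. wt x y n a b)"
    by (simp add: sum_distrib_left sum_subtractf[symmetric] algebra_simps)
  also have "\<dots> = (\<alpha> - \<eta>) * (real (n choose (x+y+1)) - c * real (n choose (x+y)))"
    unfolding total1[OF xy] total2[OF xy] by (simp add: algebra_simps)
  finally show ?thesis unfolding lo_def hi_def c_def .
qed

lemma binom_rel: "real (n - k) * real (n choose k) = real (Suc k) * real (n choose Suc k)"
proof (cases n)
  case 0 then show ?thesis by simp
next
  case (Suc m)
  have "(n - k) * (n choose k) = Suc k * (n choose Suc k)"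
    using binomial_absorb_comp[of n k] Suc_times_binomial[of k m] Suc by simp
  then show ?thesis by (metis of_nat_mult)
qed

lemma final_arith:
  fixes \<alpha> \<epsilon> e \<eta> :: real and n x y k :: nat
  assumes a: "0 < \<alpha>" and e: "0 < e" "e \<le> 1/2" "e \<le> \<epsilon>"
    and eta: "0 < \<eta>" "\<eta> \<le> \<alpha> * e / 4" "\<eta> \<le> e / (24 * (2 * real k + 1))"
    and xy: "1 \<le> x" "x \<le> k" "1 \<le> y" "y \<le> k"
    and n: "real n \<ge> 8 * (2 * real k + 1) / e" "n \<ge> 4 * k + 2"
  shows "(\<alpha> - \<eta>) * (real (n choose (x+y+1)) - (3 * \<eta> * real n + 1) * real (n choose (x+y)))
           \<ge> (1 - \<epsilon>) * \<alpha> * real (n choose (x+y+1))"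
proof -
  define K where "K = 2 * real k + 1"
  define C1 where "C1 = real (n choose (x+y+1))"
  define C0 where "C0 = real (n choose (x+y))"
  define c where "c = 3 * \<eta> * real n + 1"
  define D where "D = real (n - (x+y))"
  have K0: "K > 0" unfolding K_def by simp
  have C1nn: "C1 \<ge> 0" "C0 \<ge> 0" unfolding C1_def C0_def by simp_all
  have "2 * (n - (x+y)) \<ge> n" using xy n(2) by linarith
  then have D2: "2 * D \<ge> real n" unfolding D_def by (metis of_nat_le_iff of_nat_mult of_nat_numeral)
  have Dpos: "D > 0" using D2 n(2) by simp
  have rel: "D * C0 = real (x+y+1) * C1" unfolding D_def C0_def C1_def using binom_rel[of n "x+y"] by simp
  have mK: "real (x+y+1) \<le> K" unfolding K_def using xy by simp
  have etaK: "\<eta> * K \<le> e / 24" using eta(3) K0 unfolding K_def by (simp add: le_divide_eq algebra_simps)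
  have nK: "K \<le> e * real n / 8" using n(1) e(1) unfolding K_def by (simp add: divide_le_eq mult.commute)
  have c0: "c \<ge> 0" unfolding c_def using eta by simp
  have "c * real (x+y+1) \<le> c * K" using mK c0 by (rule mult_left_mono)
  also have "c * K = 3 * real n * (\<eta> * K) + K" unfolding c_def by (simp add: algebra_simps)
  also have "\<dots> \<le> 3 * real n * (e / 24) + e * real n / 8"
    using etaK nK by (intro add_mono mult_left_mono) auto
  also have "\<dots> = (e / 4) * real n" by simp
  also have "\<dots> \<le> (e / 2) * D" using D2 e by simp
  finally have cm: "c * real (x+y+1) \<le> (e / 2) * D" .
  have "D * (c * C0) = c * (D * C0)" by (simp add: algebra_simps)
  also have "\<dots> = (c * real (x+y+1)) * C1" unfolding rel by (simp add: algebra_simps)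
  also have "\<dots> \<le> ((e / 2) * D) * C1" using cm C1nn by (intro mult_right_mono) auto
  finally have "D * (c * C0) \<le> D * ((e / 2) * C1)" by (simp add: algebra_simps)
  then have cC0: "c * C0 \<le> (e / 2) * C1" using Dpos by simp
  have L1: "C1 - c * C0 \<ge> (1 - e / 2) * C1" using cC0 by (simp add: algebra_simps)
  have ae: "\<alpha> - \<eta> \<ge> \<alpha> * (1 - e / 4)" using eta by (simp add: algebra_simps)
  have ae0: "\<alpha> * (1 - e / 4) \<ge> 0" using a e by simp
  have q0: "(1 - e / 2) * C1 \<ge> 0" using e C1nn by simp
  have "(\<alpha> - \<eta>) * (C1 - c * C0) \<ge> (\<alpha> - \<eta>) * ((1 - e / 2) * C1)"
    using L1 ae ae0 by (intro mult_left_mono) auto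
  moreover have "(\<alpha> - \<eta>) * ((1 - e / 2) * C1) \<ge> (\<alpha> * (1 - e / 4)) * ((1 - e / 2) * C1)"
    using ae q0 by (rule mult_right_mono)
  moreover have "(\<alpha> * (1 - e / 4)) * ((1 - e / 2) * C1) \<ge> (1 - e) * \<alpha> * C1"
  proof -
    have "(\<alpha> * (1 - e / 4)) * ((1 - e / 2) * C1) - (1 - e) * \<alpha> * C1 = \<alpha> * C1 * (e / 4 + e * e / 8)"
      by (simp add: algebra_simps)
    moreover have "\<alpha> * C1 * (e / 4 + e * e / 8) \<ge> 0" using a C1nn e by simp
    ultimately show ?thesis by linarith
  qed
  moreover have "(1 - e) * \<alpha> * C1 \<ge> (1 - \<epsilon>) * \<alpha> * C1"
    using e a C1nn by (intro mult_right_mono) auto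
  ultimately show ?thesis unfolding C1_def C0_def c_def by linarith
qed

theorem lemma3p5:
  fixes \<alpha> \<epsilon> :: real and k :: nat
  assumes "\<alpha> > 0" and "\<epsilon> > 0"
  shows "\<exists>\<eta>::real. \<eta> > 0 \<and> (\<exists>N::nat. \<forall>n>N. \<forall>f :: nat \<Rightarrow> real.
           ((\<forall>t\<in>{1..n}. 0 \<le> f t \<and> f t \<le> 1) \<and>
            (\<forall>J. interval_of n J \<and> real (card J) \<ge> of_int \<lfloor>\<eta> * real n\<rfloor> \<longrightarrow>
                 \<bar>(\<Sum>t\<in>J. f t) / real (card J) - \<alpha>\<bar> \<le> \<eta>))
           \<longrightarrow> (\<forall>x\<in>{1..k}. \<forall>y\<in>{1..k}.
                 (\<Sum>t\<in>{nat \<lceil>\<eta> * real n\<rceil>..nat \<lfloor>(1 - \<eta>) * real n\<rfloor>}.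
                    f t * real ((t - 1) choose x) * real ((n - t) choose y))
                 \<ge> (1 - \<epsilon>) * \<alpha> * real (n choose (x + y + 1))))"
proof -
  define e where "e = min \<epsilon> (1/2)"
  define K where "K = 2 * real k + 1"
  define \<eta> where "\<eta> = min (\<alpha> * e / 4) (e / (24 * K))"
  define N where "N = nat \<lceil>8 * K / e\<rceil> + 4 * k + 2"
  have e: "0 < e" "e \<le> 1/2" "e \<le> \<epsilon>" using assms unfolding e_def by auto
  have K0: "K \<ge> 1" unfolding K_def by simp
  have eta: "0 < \<eta>" "\<eta> \<le> \<alpha> * e / 4" "\<eta> \<le> e / (24 * K)"
    using assms e K0 unfolding \<eta>_def by auto
  have eta1: "\<eta> < 1"
  proof -
    have "e / (24 * K) \<le> e" using e K0 by (simp add: divide_le_eq)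
    then show ?thesis using eta e by linarith
  qed
  have etaa: "\<eta> \<le> \<alpha>"
  proof -
    have "\<alpha> * e / 4 \<le> \<alpha>" using e assms by (simp add: mult_le_cancel_left1 divide_le_eq)
    then show ?thesis using eta by linarith
  qed
  show ?thesis
  proof (intro exI conjI allI impI ballI)
    show "\<eta> > 0" using eta by simp
    fix n :: nat and f :: "nat \<Rightarrow> real" and x y
    assume nN: "N < n"
    assume H: "(\<forall>t\<in>{1..n}. 0 \<le> f t \<and> f t \<le> 1) \<and>
            (\<forall>J. interval_of n J \<and> real (card J) \<ge> of_int \<lfloor>\<eta> * real n\<rfloor> \<longrightarrow>
                 \<bar>(\<Sum>t\<in>J. f t) / real (card J) - \<alpha>\<bar> \<le> \<eta>)"
    assume x: "x \<in> {1..k}" and y: "y \<in> {1..k}"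
    have n2: "n \<ge> 4 * k + 2" using nN unfolding N_def by simp
    have n1: "real n \<ge> 8 * K / e"
    proof -
      have "8 * K / e \<le> real (nat \<lceil>8 * K / e\<rceil>)" by (rule real_nat_ceiling_ge)
      also have "nat \<lceil>8 * K / e\<rceil> \<le> n" using nN unfolding N_def by linarith
      then have "real (nat \<lceil>8 * K / e\<rceil>) \<le> real n" by (rule of_nat_mono)
      finally show ?thesis .
    qed
    have "(\<Sum>t\<in>{nat \<lceil>\<eta> * real n\<rceil>..nat \<lfloor>(1 - \<eta>) * real n\<rfloor>}.
                    f t * real ((t - 1) choose x) * real ((n - t) choose y))
          \<ge> (\<alpha> - \<eta>) * (real (n choose (x+y+1)) - (3 * \<eta> * real n + 1) * real (n choose (x+y)))"
      using H x y n2 by (intro main_bound[OF eta(1) eta1 etaa]) auto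
    moreover have "(\<alpha> - \<eta>) * (real (n choose (x+y+1)) - (3 * \<eta> * real n + 1) * real (n choose (x+y)))
           \<ge> (1 - \<epsilon>) * \<alpha> * real (n choose (x+y+1))"
      using x y n1 n2 eta e assms unfolding K_def by (intro final_arith[where k=k and e=e]) auto
    ultimately show "(\<Sum>t\<in>{nat \<lceil>\<eta> * real n\<rceil>..nat \<lfloor>(1 - \<eta>) * real n\<rfloor>}.
                    f t * real ((t - 1) choose x) * real ((n - t) choose y))
                 \<ge> (1 - \<epsilon>) * \<alpha> * real (n choose (x + y + 1))" by linarith
  qed
qed

end
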